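(* Let $S$ be a GCD closed set of positive integers with $n\ge 3$ elements. Then $i_+([S])\ge 1$ and $2\le i_-([S])\le n-1$.
   Context: $S$ is GCD closed if $\gcd(x,y)\in S$ for all $x,y\in S$. The LCM matrix $[S]$ of $S=\{x_1,\dots,x_n\}$ has $(i,j)$ entry $\mathrm{lcm}(x_i,x_j)$; $i_+(M)$ and $i_-(M)$ denote the numbers of positive and negative eigenvalues (with multiplicity) of a real symmetric matrix $M$. *)

theory Defs
  imports "Jordan_Normal_Form.Char_Poly"
begin

definition gcd_closed :: "nat set \<Rightarrow> bool" where
  "gcd_closed S \<longleftrightarrow> (\<forall>x\<in>S. \<forall>y\<in>S. gcd x y \<in> S)"

text \<open>LCM matrix of S = {x_1 < ... < x_n} (elements listed in increasing order;
  the inertia does not depend on the ordering).\<close>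
definition lcm_matrix :: "nat set \<Rightarrow> real mat" where
  "lcm_matrix S = (let xs = sorted_list_of_set S in
     mat (length xs) (length xs) (\<lambda>(i,j). real (lcm (xs ! i) (xs ! j))))"

text \<open>Number of positive / negative eigenvalues counted with (algebraic) multiplicity,
  i.e. positive / negative real roots of the characteristic polynomial counted with order.\<close>
definition i_plus :: "real mat \<Rightarrow> nat" where
  "i_plus M = (\<Sum>x\<in>{x. x > 0 \<and> poly (char_poly M) x = 0}. order x (char_poly M))"

definition i_minus :: "real mat \<Rightarrow> nat" where
  "i_minus M = (\<Sum>x\<in>{x. x < 0 \<and> poly (char_poly M) x = 0}. order x (char_poly M))"

end

theory Submission
  imports Defs "Jordan_Normal_Form.Schur_Decomposition"
begin


lemma real_cscalar: "(x::real vec) \<bullet>c y = x \<bullet> y"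
proof -
  have "conjugate y = y" by (rule eq_vecI) auto
  thus ?thesis by simp
qed

lemma orthonormal_completion:
  fixes v :: "real vec"
  assumes v: "v \<in> carrier_vec n" and v0: "v \<noteq> 0\<^sub>v n"
  shows "\<exists>W c. W \<in> carrier_mat n n \<and> W\<^sup>T * W = 1\<^sub>m n \<and> col W 0 = c \<cdot>\<^sub>v v"
proof -
  interpret cof_vec_space n "TYPE(real)" .
  define b where "b = basis_completion v"
  define ws where "ws = gram_schmidt n b"
  from basis_completion[OF v v0, folded b_def]
  have dist_b: "distinct b" 
    and indep: "\<not> lin_dep (set b)" and b: "set b \<subseteq> carrier_vec n" and hdb: "hd b = v" 
    and len_b: "length b = n" by auto
  have n: "n \<noteq> 0" using v v0 by auto
  from hdb len_b n obtain vs where bv: "b = v # vs" by (cases b, auto)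
  from gram_schmidt_result[OF b dist_b indep refl, folded ws_def]
  have ws: "set ws \<subseteq> carrier_vec n" "corthogonal ws" "length ws = n" 
    by (auto simp: len_b)
  from gram_schmidt_hd[OF v, of vs, folded bv] have hdws: "hd ws = v" unfolding ws_def .
  have ws0: "ws ! 0 = v" using hdws ws(3) n by (cases ws) auto
  have wsc: "\<And>i. i < n \<Longrightarrow> ws ! i \<in> carrier_vec n" using ws by auto
  have orth: "\<And>i j. i < n \<Longrightarrow> j < n \<Longrightarrow> (ws ! i \<bullet> ws ! j = 0) = (i \<noteq> j)"
    using ws(2,3) unfolding corthogonal_def real_cscalar by auto
  define nm where "nm i = sqrt (ws ! i \<bullet> ws ! i)" for i
  have sq: "ws ! i \<bullet> ws ! i \<ge> 0" for i
    unfolding scalar_prod_def by (auto intro: sum_nonneg)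
  have nmpos: "i < n \<Longrightarrow> nm i > 0" for i
    using orth[of i i] sq[of i] unfolding nm_def by auto
  define W where "W = mat n n (\<lambda>(i,j). ws ! j $ i / nm j)"
  have W: "W \<in> carrier_mat n n" unfolding W_def by auto
  have "W\<^sup>T * W = 1\<^sub>m n"
  proof (rule eq_matI)
    fix i j assume i: "i < dim_row (1\<^sub>m n)" and j: "j < dim_col (1\<^sub>m n)"
    hence i: "i < n" and j: "j < n" by auto
    have "(W\<^sup>T * W) $$ (i,j) = (\<Sum>k<n. (ws ! i $ k / nm i) * (ws ! j $ k / nm j))"
      using i j W unfolding W_def
      by (auto simp: scalar_prod_def atLeast0LessThan intro!: sum.cong)
    also have "\<dots> = (ws ! i \<bullet> ws ! j) / (nm i * nm j)"
      using wsc[OF i] wsc[OF j]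
      by (auto simp: scalar_prod_def atLeast0LessThan sum_divide_distrib intro!: sum.cong)
    also have "\<dots> = 1\<^sub>m n $$ (i,j)"
    proof (cases "i = j")
      case True
      have "nm i * nm i = ws ! i \<bullet> ws ! i" unfolding nm_def using sq[of i]
        by simp
      thus ?thesis using True i nmpos[OF i] by auto
    next
      case False thus ?thesis using orth[OF i j] i j by auto
    qed
    finally show "(W\<^sup>T * W) $$ (i,j) = 1\<^sub>m n $$ (i,j)" .
  qed (use W in auto)
  moreover have "col W 0 = (1 / nm 0) \<cdot>\<^sub>v v"
    using n v ws0 unfolding W_def by (auto intro!: eq_vecI)
  ultimately show ?thesis using W by blast
qed



lemma kernel_exists:
  fixes U :: "real mat"
  assumes U: "U \<in> carrier_mat n k" and nk: "n < k"
  shows "\<exists>c \<in> carrier_vec k. c \<noteq> 0\<^sub>v k \<and> U *\<^sub>v c = 0\<^sub>v n"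
proof -
  define U2 where "U2 = mat\<^sub>r k k (\<lambda>i. if i = k - 1 then 0\<^sub>v k else (if i < n then row U i else 0\<^sub>v k))"
  have U2: "U2 \<in> carrier_mat k k" unfolding U2_def by auto
  have "det U2 = 0" unfolding U2_def
    by (rule det_row_0) (use nk U in auto)
  from this[unfolded det_0_iff_vec_prod_zero[OF U2]] obtain c where
    c: "c \<in> carrier_vec k" "c \<noteq> 0\<^sub>v k" "U2 *\<^sub>v c = 0\<^sub>v k" by auto
  have "U *\<^sub>v c = 0\<^sub>v n"
  proof (rule eq_vecI)
    fix i assume "i < dim_vec (0\<^sub>v n :: real vec)"
    hence i: "i < n" by auto
    have "(U2 *\<^sub>v c) $ i = 0" using c(3) i nk by auto
    moreover have "i \<noteq> k - 1" using i nk by auto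
    ultimately have "row U i \<bullet> c = 0" using i nk U unfolding U2_def by auto
    thus "(U *\<^sub>v c) $ i = 0\<^sub>v n $ i" using i U by auto
  qed (use U in auto)
  with c show ?thesis by auto
qed

lemma quad_block:
  fixes C :: "real mat" and e :: real
  assumes C: "C \<in> carrier_mat m m" and z: "z \<in> carrier_vec (Suc m)"
  defines "B \<equiv> four_block_mat (mat 1 1 (\<lambda>_. e)) (0\<^sub>m 1 m) (0\<^sub>m m 1) C"
  shows "z \<bullet> (B *\<^sub>v z) = e * (z $ 0) * (z $ 0) + vec m (\<lambda>i. z $ Suc i) \<bullet> (C *\<^sub>v vec m (\<lambda>i. z $ Suc i))"
proof -
  define t where "t = vec m (\<lambda>i. z $ Suc i)"
  have Bc: "B \<in> carrier_mat (Suc m) (Suc m)" unfolding B_def using C by auto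
  have Bz: "B *\<^sub>v z = vec (Suc m) (\<lambda>i. if i = 0 then e * z $ 0 else (C *\<^sub>v t) $ (i - 1))"
  proof (rule eq_vecI)
    fix i assume "i < dim_vec (vec (Suc m) (\<lambda>i. if i = 0 then e * z $ 0 else (C *\<^sub>v t) $ (i - 1)))"
    hence i: "i < Suc m" by auto
    have "(B *\<^sub>v z) $ i = (\<Sum>j<Suc m. B $$ (i,j) * z $ j)"
      using i Bc z by (auto simp: scalar_prod_def atLeast0LessThan mult.commute)
    also have "\<dots> = B $$ (i,0) * z $ 0 + (\<Sum>j<m. B $$ (i, Suc j) * z $ Suc j)"
      by (rule sum.lessThan_Suc_shift)
    also have "\<dots> = (if i = 0 then e * z $ 0 else (C *\<^sub>v t) $ (i - 1))"
    proof (cases i)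
      case 0 thus ?thesis using C unfolding B_def by auto
    next
      case (Suc i')
      hence "i' < m" using i by auto
      thus ?thesis using C Suc unfolding B_def t_def
        by (auto simp: scalar_prod_def atLeast0LessThan intro!: sum.cong)
    qed
    finally show "(B *\<^sub>v z) $ i = vec (Suc m) (\<lambda>i. if i = 0 then e * z $ 0 else (C *\<^sub>v t) $ (i - 1)) $ i"
      using i by auto
  qed (use Bc in auto)
  have "z \<bullet> (B *\<^sub>v z) = (\<Sum>i<Suc m. z $ i * (B *\<^sub>v z) $ i)"
    using z Bc by (auto simp: scalar_prod_def atLeast0LessThan)
  also have "\<dots> = z $ 0 * (B *\<^sub>v z) $ 0 + (\<Sum>i<m. z $ Suc i * (B *\<^sub>v z) $ Suc i)"
    by (rule sum.lessThan_Suc_shift)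
  also have "\<dots> = e * (z $ 0) * (z $ 0) + t \<bullet> (C *\<^sub>v t)"
    unfolding Bz using C by (auto simp: scalar_prod_def atLeast0LessThan t_def intro!: sum.cong)
  finally show ?thesis unfolding t_def .
qed



lemma filter_remove1_le: "length (filter P (remove1 x xs)) \<le> length (filter P xs)"
  by (induction xs) auto

lemma inertia_bound:
  fixes A :: "real mat" and \<sigma> :: real
  assumes "A \<in> carrier_mat n n" "A\<^sup>T = A" "char_poly A = (\<Prod>e\<leftarrow>es. [:-e,1:])"
    "U \<in> carrier_mat n k"
    "\<forall>c \<in> carrier_vec k. c \<noteq> 0\<^sub>v k \<longrightarrow> \<sigma> * ((U *\<^sub>v c) \<bullet> (A *\<^sub>v (U *\<^sub>v c))) > 0"
  shows "k \<le> length (filter (\<lambda>e. \<sigma> * e > 0) es)"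
  using assms
proof (induction n arbitrary: A es U)
  case (0 A es U)
  have "length es = 0"
    using degree_monic_char_poly[OF 0(1)] degree_linear_factors[of uminus es] 0(3) by auto
  hence es: "es = []" by auto
  show ?case
  proof (rule ccontr)
    assume "\<not> ?thesis"
    hence "0 < k" using es by auto
    from kernel_exists[OF 0(4) this] obtain c where
      c: "c \<in> carrier_vec k" "c \<noteq> 0\<^sub>v k" "U *\<^sub>v c = 0\<^sub>v 0" by auto
    have "(U *\<^sub>v c) \<bullet> (A *\<^sub>v (U *\<^sub>v c)) = 0" using c(3) 0(1) by (simp add: scalar_prod_def)
    with 0(5) c show False by auto
  qed
next
  case (Suc n A es U)
  note A = Suc(2) and sym = Suc(3) and cp = Suc(4) and U = Suc(5) and pos = Suc(6)
  have len: "length es = Suc n"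
    using degree_monic_char_poly[OF A] degree_linear_factors[of uminus es] cp by auto
  show ?case
  proof (cases "\<forall>e \<in> set es. \<sigma> * e > 0")
    case True
    hence "filter (\<lambda>e. \<sigma> * e > 0) es = es" by auto
    hence cnt: "length (filter (\<lambda>e. \<sigma> * e > 0) es) = Suc n" using len by simp
    show ?thesis
    proof (rule ccontr)
      assume "\<not> ?thesis"
      hence "Suc n < k" using cnt by auto
      from kernel_exists[OF U this] obtain c where
        c: "c \<in> carrier_vec k" "c \<noteq> 0\<^sub>v k" "U *\<^sub>v c = 0\<^sub>v (Suc n)" by auto
      with pos A show False by auto
    qed
  next
    case False
    then obtain e where e: "e \<in> set es" and se: "\<sigma> * e \<le> 0" by auto
    define es' where "es' = remove1 e es"
    have cp': "char_poly A = [:-e,1:] * (\<Prod>e\<leftarrow>es'. [:-e,1:])"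
      unfolding cp es'_def by (rule prod_list_map_remove1[OF e])
    have "eigenvalue A e" unfolding eigenvalue_root_char_poly[OF A] cp' by simp
    then obtain v where v: "v \<in> carrier_vec (Suc n)" "v \<noteq> 0\<^sub>v (Suc n)" "A *\<^sub>v v = e \<cdot>\<^sub>v v"
      unfolding eigenvalue_def eigenvector_def using A by auto
    from orthonormal_completion[OF v(1,2)] obtain W c0 where
      W: "W \<in> carrier_mat (Suc n) (Suc n)" and WW: "W\<^sup>T * W = 1\<^sub>m (Suc n)" and 
      W0: "col W 0 = c0 \<cdot>\<^sub>v v" by auto
    have Wt: "W\<^sup>T \<in> carrier_mat (Suc n) (Suc n)" using W by auto
    have WW': "W * W\<^sup>T = 1\<^sub>m (Suc n)" by (rule mat_mult_left_right_inverse[OF Wt W WW])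
    have AW0: "A *\<^sub>v col W 0 = e \<cdot>\<^sub>v col W 0"
      unfolding W0 using mult_mat_vec[OF A v(1)] v(3) by (auto simp: smult_smult_assoc mult.commute)
    define A' where "A' = W\<^sup>T * A * W"
    have A': "A' \<in> carrier_mat (Suc n) (Suc n)" unfolding A'_def using W A by auto
    have A'sym: "A'\<^sup>T = A'"
    proof -
      have "A'\<^sup>T = W\<^sup>T * (W\<^sup>T * A)\<^sup>T" unfolding A'_def
        by (rule transpose_mult[of _ "Suc n" "Suc n"]) (use W A in auto)
      also have "(W\<^sup>T * A)\<^sup>T = A\<^sup>T * W"
        using transpose_mult[of "W\<^sup>T" "Suc n" "Suc n" A "Suc n"] W A by simp
      finally show ?thesis unfolding A'_def sym using W A
        by (simp add: assoc_mult_mat[of _ "Suc n" "Suc n"])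
    qed
    have A'col: "A' $$ (i, 0) = (if i = 0 then e else 0)" if i: "i < Suc n" for i
    proof -
      have "A' $$ (i,0) = (W\<^sup>T * (A * W)) $$ (i,0)"
        unfolding A'_def using W A by (simp add: assoc_mult_mat[of _ "Suc n" "Suc n"])
      also have "\<dots> = col W i \<bullet> (A *\<^sub>v col W 0)"
        using i W A by (simp add: col_mult2 mult_mat_vec_def)
      also have "\<dots> = e * (col W i \<bullet> col W 0)"
        unfolding AW0 using W i by simp
      also have "col W i \<bullet> col W 0 = (W\<^sup>T * W) $$ (i, 0)"
        using W i by simp
      also have "\<dots> = (if i = 0 then 1 else 0)" unfolding WW using i by simp
      finally show ?thesis by simp
    qed
    define A3 where "A3 = mat n n (\<lambda>(i,j). A' $$ (Suc i, Suc j))"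
    have A3: "A3 \<in> carrier_mat n n" unfolding A3_def by simp
    have A'block: "A' = four_block_mat (mat 1 1 (\<lambda>_. e)) (0\<^sub>m 1 n) (0\<^sub>m n 1) A3"
    proof (rule eq_matI)
      fix i j assume "i < dim_row (four_block_mat (mat 1 1 (\<lambda>_. e)) (0\<^sub>m 1 n) (0\<^sub>m n 1) A3)"
        "j < dim_col (four_block_mat (mat 1 1 (\<lambda>_. e)) (0\<^sub>m 1 n) (0\<^sub>m n 1) A3)"
      hence i: "i < Suc n" and j: "j < Suc n" using A3 by auto
      have sy: "A' $$ (0, j) = A' $$ (j, 0)"
        using arg_cong[OF A'sym, of "\<lambda>M. M $$ (j, 0)"] A' j by auto
      show "A' $$ (i, j) = four_block_mat (mat 1 1 (\<lambda>_. e)) (0\<^sub>m 1 n) (0\<^sub>m n 1) A3 $$ (i, j)"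
        using i j A3 A'col[OF i] A'col[OF j] sy unfolding A3_def
        by (cases i; cases j) auto
    qed (use A' A3 in auto)
    have A3sym: "A3\<^sup>T = A3"
    proof (rule eq_matI)
      fix i j assume "i < dim_row A3" "j < dim_col A3"
      hence i: "i < n" and j: "j < n" using A3 by auto
      show "A3\<^sup>T $$ (i, j) = A3 $$ (i, j)"
        using arg_cong[OF A'sym, of "\<lambda>M. M $$ (Suc i, Suc j)"] A' i j unfolding A3_def by auto
    qed (use A3 in auto)
    have "char_poly A' = char_poly A"
    proof (rule char_poly_similar)
      show "similar_mat A' A" unfolding similar_mat_def similar_mat_wit_def
        by (rule exI[of _ "W\<^sup>T"], rule exI[of _ W]) (use A' A W Wt WW WW' in \<open>auto simp: A'_def Let_def\<close>)
    qed
    also have "char_poly A' = char_poly (mat 1 1 (\<lambda>_. e)) * char_poly A3"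
      unfolding A'block by (rule char_poly_four_block_zeros_col[OF _ _ A3]) auto
    also have "char_poly (mat 1 1 (\<lambda>_. e)) = [:-e, 1:]"
      by (simp add: char_poly_defs det_def sign_def)
    finally have cp3: "char_poly A3 = (\<Prod>e\<leftarrow>es'. [:-e,1:])"
      unfolding cp' by (metis mult_cancel_left pCons_eq_0_iff zero_neq_one)
    define U' where "U' = W\<^sup>T * U"
    have U': "U' \<in> carrier_mat (Suc n) k" unfolding U'_def using W U by auto
    define U3 where "U3 = mat n k (\<lambda>(i,j). U' $$ (Suc i, j))"
    have U3: "U3 \<in> carrier_mat n k" unfolding U3_def by simp
    have pos3: "\<forall>c \<in> carrier_vec k. c \<noteq> 0\<^sub>v k \<longrightarrow> \<sigma> * ((U3 *\<^sub>v c) \<bullet> (A3 *\<^sub>v (U3 *\<^sub>v c))) > 0"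
    proof (intro ballI impI)
      fix c :: "real vec" assume c: "c \<in> carrier_vec k" "c \<noteq> 0\<^sub>v k"
      define x where "x = U *\<^sub>v c"
      have x: "x \<in> carrier_vec (Suc n)" unfolding x_def using U c by auto
      define z where "z = W\<^sup>T *\<^sub>v x"
      have z: "z \<in> carrier_vec (Suc n)" unfolding z_def using Wt x by auto
      have zU: "z = U' *\<^sub>v c" unfolding z_def x_def U'_def using Wt U c by simp
      have xz: "x = W *\<^sub>v z" unfolding z_def
        using W Wt x WW' by (simp flip: assoc_mult_mat_vec[of _ "Suc n" "Suc n"])
      have "x \<bullet> (A *\<^sub>v x) = z \<bullet> (A' *\<^sub>v z)"
      proof -
        have "x \<bullet> (A *\<^sub>v x) = (W *\<^sub>v z) \<bullet> (A *\<^sub>v (W *\<^sub>v z))" unfolding xz ..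
        also have "\<dots> = z \<bullet> (W\<^sup>T *\<^sub>v (A *\<^sub>v (W *\<^sub>v z)))"
          using transpose_vec_mult_scalar[of "W\<^sup>T" "Suc n" "Suc n" "A *\<^sub>v (W *\<^sub>v z)" z] W A z
          by (simp add: comm_scalar_prod[of _ "Suc n"])
        also have "W\<^sup>T *\<^sub>v (A *\<^sub>v (W *\<^sub>v z)) = A' *\<^sub>v z"
        proof -
          have AW: "A * W \<in> carrier_mat (Suc n) (Suc n)" using A W by auto
          have "A' *\<^sub>v z = (W\<^sup>T * (A * W)) *\<^sub>v z"
            unfolding A'_def using W A by (simp add: assoc_mult_mat[of _ "Suc n" "Suc n"])
          also have "\<dots> = W\<^sup>T *\<^sub>v ((A * W) *\<^sub>v z)" by (rule assoc_mult_mat_vec[OF Wt AW z])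
          also have "(A * W) *\<^sub>v z = A *\<^sub>v (W *\<^sub>v z)" by (rule assoc_mult_mat_vec[OF A W z])
          finally show ?thesis by simp
        qed
        finally show ?thesis .
      qed
      also have "\<dots> = e * (z $ 0) * (z $ 0) + vec n (\<lambda>i. z $ Suc i) \<bullet> (A3 *\<^sub>v vec n (\<lambda>i. z $ Suc i))"
        unfolding A'block by (rule quad_block[OF A3 z])
      also have "vec n (\<lambda>i. z $ Suc i) = U3 *\<^sub>v c"
        unfolding zU U3_def using U' c(1)
        by (intro eq_vecI) (auto simp: row_def intro!: arg_cong[where f="\<lambda>v. v \<bullet> c"] eq_vecI)
      finally have eq: "x \<bullet> (A *\<^sub>v x) = e * (z $ 0) * (z $ 0) + (U3 *\<^sub>v c) \<bullet> (A3 *\<^sub>v (U3 *\<^sub>v c))" .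
      have "\<sigma> * (x \<bullet> (A *\<^sub>v x)) > 0" using pos c unfolding x_def by auto
      moreover have "\<sigma> * (e * (z $ 0) * (z $ 0)) \<le> 0"
        using se by (metis mult.assoc mult_nonpos_nonneg zero_le_square)
      ultimately show "\<sigma> * ((U3 *\<^sub>v c) \<bullet> (A3 *\<^sub>v (U3 *\<^sub>v c))) > 0"
        unfolding eq by (simp add: distrib_left)
    qed
    have "k \<le> length (filter (\<lambda>e. \<sigma> * e > 0) es')"
      by (rule Suc(1)[OF A3 A3sym cp3 U3 pos3])
    also have "\<dots> \<le> length (filter (\<lambda>e. \<sigma> * e > 0) es)"
      unfolding es'_def by (rule filter_remove1_le)
    finally show ?thesis .
  qed
qed



lemma sym_real_rooted:
  fixes A :: "real mat"
  assumes A: "A \<in> carrier_mat n n" and sym: "A\<^sup>T = A"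
  shows "\<exists>es. char_poly A = (\<Prod>e\<leftarrow>es. [:-e,1:])"
proof -
  interpret R: map_poly_inj_comm_ring_hom "of_real :: real \<Rightarrow> complex" ..
  define Ac where "Ac = map_mat (of_real :: real \<Rightarrow> complex) A"
  have Ac: "Ac \<in> carrier_mat n n" unfolding Ac_def using A by auto
  have cpc: "char_poly Ac = map_poly of_real (char_poly A)"
    unfolding Ac_def by (rule of_real_hom.char_poly_hom[OF A])
  obtain as where as: "Polynomial.smult (lead_coeff (char_poly Ac)) (\<Prod>a\<leftarrow>as. [:- a, 1:]) = char_poly Ac"
    using fundamental_theorem_algebra_factorized by blast
  have lc: "lead_coeff (char_poly Ac) = 1" using degree_monic_char_poly[OF Ac] by auto
  have as': "char_poly Ac = (\<Prod>a\<leftarrow>as. [:- a, 1:])" using as lc by simp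
  have real: "a = of_real (Re a)" if a: "a \<in> set as" for a
  proof -
    have "eigenvalue Ac a" unfolding eigenvalue_root_char_poly[OF Ac] as'
      using linear_poly_root[OF a] .
    then obtain v where v: "v \<in> carrier_vec n" "v \<noteq> 0\<^sub>v n" "Ac *\<^sub>v v = a \<cdot>\<^sub>v v"
      unfolding eigenvalue_def eigenvector_def using Ac by auto
    have row: "(\<Sum>j<n. of_real (A $$ (i,j)) * v $ j) = a * v $ i" if i: "i < n" for i
    proof -
      have "(Ac *\<^sub>v v) $ i = a * v $ i" using v(3) i v(1) by simp
      thus ?thesis using i A v(1) unfolding Ac_def
        by (auto simp: scalar_prod_def atLeast0LessThan mult.commute)
    qed
    define s where "s = (\<Sum>i<n. \<Sum>j<n. cnj (v $ i) * of_real (A $$ (i,j)) * v $ j)"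
    define N where "N = (\<Sum>i<n. cnj (v $ i) * v $ i)"
    have sN: "s = a * N" unfolding s_def N_def
    proof -
      have "(\<Sum>i<n. \<Sum>j<n. cnj (v $ i) * of_real (A $$ (i,j)) * v $ j)
          = (\<Sum>i<n. cnj (v $ i) * (\<Sum>j<n. of_real (A $$ (i,j)) * v $ j))"
        by (simp add: sum_distrib_left mult.assoc)
      also have "\<dots> = (\<Sum>i<n. cnj (v $ i) * (a * v $ i))" using row by simp
      also have "\<dots> = a * (\<Sum>i<n. cnj (v $ i) * v $ i)"
        by (simp add: sum_distrib_left mult.commute mult.left_commute)
      finally show "(\<Sum>i<n. \<Sum>j<n. cnj (v $ i) * of_real (A $$ (i,j)) * v $ j) = a * (\<Sum>i<n. cnj (v $ i) * v $ i)" .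
    qed
    have Aij: "A $$ (i,j) = A $$ (j,i)" if "i < n" "j < n" for i j
      using arg_cong[OF sym, of "\<lambda>M. M $$ (i,j)"] that A by auto
    have cs: "cnj s = s"
    proof -
      have "cnj s = (\<Sum>i<n. \<Sum>j<n. v $ i * of_real (A $$ (i,j)) * cnj (v $ j))"
        unfolding s_def by (simp add: cnj_sum)
      also have "\<dots> = (\<Sum>j<n. \<Sum>i<n. v $ i * of_real (A $$ (i,j)) * cnj (v $ j))"
        by (rule sum.swap)
      also have "\<dots> = s" unfolding s_def
        by (intro sum.cong refl) (simp add: Aij mult.commute mult.left_commute)
      finally show ?thesis .
    qed
    have Nr: "N = of_real (\<Sum>i<n. (cmod (v $ i))^2)"
      unfolding N_def of_real_sum by (intro sum.cong refl) (simp add: complex_norm_square mult.commute del: of_real_power)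
    have "(\<Sum>i<n. (cmod (v $ i))^2) > 0"
    proof -
      obtain i where i: "i < n" "v $ i \<noteq> 0" using v(1,2) by (metis eq_vecI carrier_vecD index_zero_vec)
      have "(cmod (v $ i))^2 \<le> (\<Sum>i<n. (cmod (v $ i))^2)"
        using i by (intro member_le_sum) auto
      moreover have "(cmod (v $ i))^2 > 0" using i by auto
      ultimately show ?thesis by linarith
    qed
    then obtain r where r: "N = of_real r" "r > 0" using Nr by blast
    have "cnj a * of_real r = a * of_real r" using cs sN r by simp
    hence "cnj a = a" using r(2) by simp
    thus ?thesis by (simp add: complex_eq_iff)
  qed
  define es where "es = map Re as"
  have "as = map of_real es" unfolding es_def using real by (induction as) auto
  hence "map_poly of_real (\<Prod>e\<leftarrow>es. [:-e,1:]) = (\<Prod>a\<leftarrow>as. [:-a,1:])"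
    by (simp add: R.hom_prod_list o_def)
  hence "map_poly (of_real :: real \<Rightarrow> complex) (char_poly A) = map_poly of_real (\<Prod>e\<leftarrow>es. [:-e,1:])"
    unfolding cpc[symmetric] as' by simp
  hence "char_poly A = (\<Prod>e\<leftarrow>es. [:-e,1:])" by (rule R.injectivity)
  thus ?thesis by blast
qed



lemma order_linear_prod:
  "Polynomial.order (x::real) (\<Prod>e\<leftarrow>es. [:-e,1:]) = count_list es x"
proof (induction es)
  case Nil
  then show ?case by (simp add: order_0I)
next
  case (Cons a es)
  have nz: "(\<Prod>e\<leftarrow>es. [:-e,1:]) \<noteq> (0 :: real poly)"
    by (auto simp: prod_list_zero_iff)
  have "[:-a,1:] * (\<Prod>e\<leftarrow>es. [:-e,1:]) \<noteq> (0 :: real poly)"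
    using nz by (metis mult_eq_0_iff pCons_eq_0_iff one_neq_zero)
  hence "Polynomial.order x ([:-a,1:] * (\<Prod>e\<leftarrow>es. [:-e,1:])) = Polynomial.order x [:-a,1:] + Polynomial.order x (\<Prod>e\<leftarrow>es. [:-e,1:])"
    by (rule order_mult)
  moreover have "(\<Prod>e\<leftarrow>a#es. [:-e,1:]) = [:-a,1:] * (\<Prod>e\<leftarrow>es. [:-e,1:])" by simp
  moreover have "Polynomial.order x [:-a,1:] = (if a = x then 1 else 0)" unfolding order_linear' by auto
  ultimately show ?case using Cons by simp
qed

lemma count_roots:
  fixes P :: "real \<Rightarrow> bool"
  shows "(\<Sum>x\<in>{x. P x \<and> poly (\<Prod>e\<leftarrow>es. [:-e,1:]) x = 0}. Polynomial.order x (\<Prod>e\<leftarrow>es. [:-e,1:]))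
         = length (filter P es)"
proof -
  have set: "{x. P x \<and> poly (\<Prod>e\<leftarrow>es. [:-e,1:]) x = 0} = set (filter P es)"
    by (auto simp: poly_prod_list_zero_iff)
  have "(\<Sum>x\<in>set (filter P es). Polynomial.order x (\<Prod>e\<leftarrow>es. [:-e,1:]))
      = (\<Sum>x\<in>set (filter P es). count_list (filter P es) x)"
    unfolding order_linear_prod
    by (intro sum.cong refl) (auto simp: count_list_eq_length_filter filter_filter intro!: arg_cong[where f=length] filter_cong)
  also have "\<dots> = length (filter P es)" by (rule sum_count_set) auto
  finally show ?thesis unfolding set .
qed

lemma quad3:
  fixes A :: "real mat"
  assumes A: "A \<in> carrier_mat n n" and n: "3 \<le> n" and x: "x \<in> carrier_vec n"
    and z: "\<And>i. 3 \<le> i \<Longrightarrow> i < n \<Longrightarrow> x $ i = 0"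
  shows "x \<bullet> (A *\<^sub>v x) = (\<Sum>i<3. \<Sum>j<3. x$i * A$$(i,j) * x$j)"
proof -
  have "x \<bullet> (A *\<^sub>v x) = (\<Sum>i<n. x$i * (\<Sum>j<n. A$$(i,j) * x$j))"
    using A x by (simp add: scalar_prod_def atLeast0LessThan)
  also have "\<dots> = (\<Sum>i<n. \<Sum>j<n. x$i * A$$(i,j) * x$j)"
    by (simp add: sum_distrib_left mult.assoc)
  also have "\<dots> = (\<Sum>i<3. \<Sum>j<n. x$i * A$$(i,j) * x$j)"
    by (rule sum.mono_neutral_right) (use n z in auto)
  also have "\<dots> = (\<Sum>i<3. \<Sum>j<3. x$i * A$$(i,j) * x$j)"
    by (rule sum.cong[OF refl], rule sum.mono_neutral_right) (use n z in auto)
  finally show ?thesis .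
qed

lemma filter_disj_le:
  "(\<And>x. P x \<Longrightarrow> \<not> Q x) \<Longrightarrow> length (filter P xs) + length (filter Q xs) \<le> length xs"
  by (induction xs) auto

theorem theorem5p2:
  fixes S :: "nat set" and n :: nat
  assumes "finite S" and "\<forall>x\<in>S. x > 0" and "gcd_closed S"
    and "card S = n" and "n \<ge> 3"
  shows "i_plus (lcm_matrix S) \<ge> 1 \<and> 2 \<le> i_minus (lcm_matrix S) \<and> i_minus (lcm_matrix S) \<le> n - 1"
proof -
  note fin = assms(1) and posS = assms(2) and gc = assms(3) and n = assms(5)
  define xs where "xs = sorted_list_of_set S"
  have len: "length xs = n" unfolding xs_def using assms(4) by simp
  have setxs: "set xs = S" unfolding xs_def using fin by simp
  have strict: "sorted_wrt (<) xs" unfolding xs_def by simp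
  have lt: "\<And>i j. i < j \<Longrightarrow> j < n \<Longrightarrow> xs ! i < xs ! j"
    using strict len by (simp add: sorted_wrt_nth_less)
  have le_iff: "\<And>i j. i < n \<Longrightarrow> j < n \<Longrightarrow> xs ! i \<le> xs ! j \<longleftrightarrow> i \<le> j"
    by (metis lt linorder_not_le order_less_imp_le le_neq_implies_less order.refl)
  have inS: "\<And>i. i < n \<Longrightarrow> xs ! i \<in> S" using setxs len by auto
  have inS': "\<And>x. x \<in> S \<Longrightarrow> \<exists>i<n. x = xs ! i" using setxs len by (metis in_set_conv_nth)
  define m where "m = xs ! 0"
  define a where "a = xs ! 1"
  define b where "b = xs ! 2"
  have mS: "m \<in> S" and aS: "a \<in> S" and bS: "b \<in> S" unfolding m_def a_def b_def using inS n by auto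
  have ma: "m < a" and ab: "a < b" unfolding m_def a_def b_def using lt n by auto
  have m0: "m > 0" using posS mS by auto
  have mdvd: "m dvd x" if x: "x \<in> S" for x
  proof -
    have g: "gcd m x \<in> S" using gc mS x unfolding gcd_closed_def by auto
    then obtain i where i: "i < n" "gcd m x = xs ! i" using inS' by blast
    have "m \<le> xs ! i" unfolding m_def using le_iff[of 0 i] i n by auto
    hence "m \<le> gcd m x" using i(2) by simp
    moreover have "gcd m x \<le> m" using m0 by (simp add: gcd_le1_nat)
    ultimately have "gcd m x = m" by simp
    thus ?thesis by (metis gcd_dvd2)
  qed
  have gab: "gcd a b = m \<or> gcd a b = a"
  proof -
    have g: "gcd a b \<in> S" using gc aS bS unfolding gcd_closed_def by auto
    then obtain i where i: "i < n" "gcd a b = xs ! i" using inS' by blast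
    have "gcd a b \<le> a" using ma by (simp add: gcd_le1_nat)
    hence "i \<le> 1" using le_iff[of i 1] i n unfolding a_def by auto
    thus ?thesis using i unfolding m_def a_def by (cases i) auto
  qed
  define A where "A = lcm_matrix S"
  have Adef: "A = mat n n (\<lambda>(i,j). real (lcm (xs ! i) (xs ! j)))"
    unfolding A_def lcm_matrix_def Let_def xs_def[symmetric] len ..
  have A: "A \<in> carrier_mat n n" unfolding Adef by simp
  have Asym: "A\<^sup>T = A" unfolding Adef by (rule eq_matI) (auto simp: lcm.commute)
  obtain es where es: "char_poly A = (\<Prod>e\<leftarrow>es. [:-e,1:])"
    using sym_real_rooted[OF A Asym] by blast
  have lenes: "length es = n"
    using degree_monic_char_poly[OF A] degree_linear_factors[of uminus es] es by auto
  have ip: "i_plus A = length (filter (\<lambda>e. e > 0) es)"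
    unfolding i_plus_def es by (rule count_roots)
  have im: "i_minus A = length (filter (\<lambda>e. e < 0) es)"
    unfolding i_minus_def es by (rule count_roots)
  have ent: "\<And>i j. i < n \<Longrightarrow> j < n \<Longrightarrow> A $$ (i,j) = real (lcm (xs!i) (xs!j))"
    unfolding Adef by simp
  have x0: "xs ! 0 = m" and x1: "xs ! 1 = a" and x2: "xs ! 2 = b" unfolding m_def a_def b_def by auto
  have lma: "lcm m a = a" and lmb: "lcm m b = b"
    using mdvd[OF aS] mdvd[OF bS] by (auto simp: lcm_proj2_if_dvd)
  have n0: "0 < n" and n1: "1 < n" and n2: "2 < n" using n by auto
  have A00: "A $$ (0,0) = real m" using ent[OF n0 n0] x0 by simp
  have A01: "A $$ (0,1) = real a" using ent[OF n0 n1] x0 x1 lma by simp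
  have A10: "A $$ (1,0) = real a" using ent[OF n1 n0] x0 x1 lma by (simp add: lcm.commute)
  have A02: "A $$ (0,2) = real b" using ent[OF n0 n2] x0 x2 lmb by simp
  have A20: "A $$ (2,0) = real b" using ent[OF n2 n0] x0 x2 lmb by (simp add: lcm.commute)
  have A11: "A $$ (1,1) = real a" using ent[OF n1 n1] x1 by simp
  have A22: "A $$ (2,2) = real b" using ent[OF n2 n2] x2 by simp
  have A12: "A $$ (1,2) = real (lcm a b)" using ent[OF n1 n2] x1 x2 by simp
  have A21: "A $$ (2,1) = real (lcm a b)" using ent[OF n2 n1] x1 x2 by (simp add: lcm.commute)
  note Aents = A00 A01 A10 A02 A20 A11 A22 A12 A21
  note Aents' = Aents[unfolded One_nat_def numeral_2_eq_2]
  have "1 \<le> length (filter (\<lambda>e. 1 * e > 0) es)"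
  proof (rule inertia_bound[OF A Asym es])
    show "mat n 1 (\<lambda>(i,j). if i = 0 then 1 else 0) \<in> carrier_mat n 1" by simp
    show "\<forall>c\<in>carrier_vec 1. c \<noteq> 0\<^sub>v 1 \<longrightarrow>
      0 < 1 * ((mat n 1 (\<lambda>(i,j). if i = 0 then 1 else 0) *\<^sub>v c) \<bullet> (A *\<^sub>v (mat n 1 (\<lambda>(i,j). if i = 0 then 1 else 0) *\<^sub>v c)))"
    proof (intro ballI impI)
      fix c :: "real vec" assume c: "c \<in> carrier_vec 1" "c \<noteq> 0\<^sub>v 1"
      define x where "x = mat n 1 (\<lambda>(i,j). if i = 0 then 1 else 0) *\<^sub>v c"
      have x: "x \<in> carrier_vec n" unfolding x_def carrier_vec_def by simp
      have xi: "x $ i = (if i = 0 then c $ 0 else 0)" if "i < n" for i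
        unfolding x_def using that c(1) by (auto simp: scalar_prod_def)
      have c0: "c $ 0 \<noteq> 0" using c by (metis eq_vecI carrier_vecD index_zero_vec less_one)
      have "x \<bullet> (A *\<^sub>v x) = (\<Sum>i<3. \<Sum>j<3. x$i * A$$(i,j) * x$j)"
        by (rule quad3[OF A n x]) (simp add: xi)
      also have "\<dots> = c $ 0 * c $ 0 * real m"
        using n by (simp add: eval_nat_numeral xi A00)
      finally have "x \<bullet> (A *\<^sub>v x) = c $ 0 * c $ 0 * real m" .
      then show "0 < 1 * ((mat n 1 (\<lambda>(i,j). if i = 0 then 1 else 0) *\<^sub>v c) \<bullet> (A *\<^sub>v (mat n 1 (\<lambda>(i,j). if i = 0 then 1 else 0) *\<^sub>v c)))"
      proof -
        have "c $ 0 * c $ 0 > 0" using c0 not_real_square_gt_zero by blast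
        hence "c $ 0 * c $ 0 * real m > 0" using m0 by simp
        with \<open>x \<bullet> (A *\<^sub>v x) = c $ 0 * c $ 0 * real m\<close> show ?thesis unfolding x_def by simp
      qed
    qed
  qed
  hence ipos: "1 \<le> i_plus A" unfolding ip by simp
  obtain u1 u2 :: "nat \<Rightarrow> real" and p q :: real where
    u: "\<And>i. 3 \<le> i \<Longrightarrow> u1 i = 0" "\<And>i. 3 \<le> i \<Longrightarrow> u2 i = 0" and pq: "p < 0" "q < 0" and
    Q: "\<And>c0 c1. (\<Sum>i<3. \<Sum>j<3. (c0 * u1 i + c1 * u2 i) * A$$(i,j) * (c0 * u1 j + c1 * u2 j))
         = p * c0 * c0 + q * c1 * c1"
  proof (cases "gcd a b = a")
    case True
    hence "a dvd b" by (metis gcd_dvd2)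
    hence L: "lcm a b = b" by (simp add: lcm_proj2_if_dvd)
    show ?thesis
    proof (rule that[of "\<lambda>i. if i = 0 then 1 else if i = 1 then -1 else 0"
                       "\<lambda>i. if i = 1 then 1 else if i = 2 then -1 else 0" "real m - real a" "real a - real b"])
      show "real m - real a < 0" "real a - real b < 0" using ma ab by auto
      fix c0 c1 :: real
      show "(\<Sum>i<3. \<Sum>j<3. (c0 * (if i = 0 then 1 else if i = 1 then -1 else 0) + c1 * (if i = 1 then 1 else if i = 2 then -1 else 0)) * A$$(i,j) * (c0 * (if j = 0 then 1 else if j = 1 then -1 else 0) + c1 * (if j = 1 then 1 else if j = 2 then -1 else 0)))
         = (real m - real a) * c0 * c0 + (real a - real b) * c1 * c1"
        by (simp add: eval_nat_numeral Aents Aents' L algebra_simps)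
    qed auto
  next
    case False
    hence g: "gcd a b = m" using gab by auto
    have Lm: "real (lcm a b) * real m = real a * real b"
      using prod_gcd_lcm_nat[of a b] g by (metis mult.commute of_nat_mult)
    have Lm': "real (lcm a b) = real a * real b / real m" using Lm m0 by (simp add: field_simps)
    have mne: "real m \<noteq> 0" using m0 by simp
    show ?thesis
    proof (rule that[of "\<lambda>i. if i = 0 then - real a else if i = 1 then real m else 0"
                       "\<lambda>i. if i = 0 then - real b else if i = 2 then real m else 0"
                       "real m * real a * (real m - real a)" "real m * real b * (real m - real b)"])
      show "real m * real a * (real m - real a) < 0" "real m * real b * (real m - real b) < 0"
        using ma ab m0 by (auto simp: mult_pos_neg)
      fix c0 c1 :: real
      show "(\<Sum>i<3. \<Sum>j<3. (c0 * (if i = 0 then - real a else if i = 1 then real m else 0) + c1 * (if i = 0 then - real b else if i = 2 then real m else 0)) * A$$(i,j) * (c0 * (if j = 0 then - real a else if j = 1 then real m else 0) + c1 * (if j = 0 then - real b else if j = 2 then real m else 0)))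
         = real m * real a * (real m - real a) * c0 * c0 + real m * real b * (real m - real b) * c1 * c1"
        by (simp add: eval_nat_numeral Aents Aents' Lm') (simp add: field_simps mne, algebra)
    qed auto
  qed
  define U where "U = mat n 2 (\<lambda>(i,j). if j = 0 then u1 i else u2 i)"
  have "2 \<le> length (filter (\<lambda>e. (-1) * e > 0) es)"
  proof (rule inertia_bound[OF A Asym es])
    show "U \<in> carrier_mat n 2" unfolding U_def by simp
    show "\<forall>c\<in>carrier_vec 2. c \<noteq> 0\<^sub>v 2 \<longrightarrow> 0 < (-1) * ((U *\<^sub>v c) \<bullet> (A *\<^sub>v (U *\<^sub>v c)))"
    proof (intro ballI impI)
      fix c :: "real vec" assume c: "c \<in> carrier_vec 2" "c \<noteq> 0\<^sub>v 2"
      define x where "x = U *\<^sub>v c"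
      have x: "x \<in> carrier_vec n" unfolding x_def U_def carrier_vec_def by simp
      have xi: "x $ i = c $ 0 * u1 i + c $ 1 * u2 i" if "i < n" for i
        unfolding x_def U_def using that c(1) by (auto simp: scalar_prod_def eval_nat_numeral)
      have c01: "c $ 0 \<noteq> 0 \<or> c $ 1 \<noteq> 0"
      proof (rule ccontr)
        assume "\<not> ?thesis"
        hence "c = 0\<^sub>v 2" using c(1) by (intro eq_vecI) (auto simp: less_2_cases_iff)
        with c(2) show False by simp
      qed
      have "x \<bullet> (A *\<^sub>v x) = (\<Sum>i<3. \<Sum>j<3. x$i * A$$(i,j) * x$j)"
        by (rule quad3[OF A n x]) (simp add: xi u)
      also have "\<dots> = (\<Sum>i<3. \<Sum>j<3. (c $ 0 * u1 i + c $ 1 * u2 i) * A$$(i,j) * (c $ 0 * u1 j + c $ 1 * u2 j))"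
        using n by (intro sum.cong refl) (simp add: xi)
      also have "\<dots> = p * c $ 0 * c $ 0 + q * c $ 1 * c $ 1" by (rule Q)
      finally have eq: "x \<bullet> (A *\<^sub>v x) = p * c $ 0 * c $ 0 + q * c $ 1 * c $ 1" .
      have "p * c $ 0 * c $ 0 \<le> 0" "q * c $ 1 * c $ 1 \<le> 0"
        using pq by (metis mult.assoc mult_nonpos_nonneg less_imp_le zero_le_square)+
      moreover have "p * c $ 0 * c $ 0 < 0 \<or> q * c $ 1 * c $ 1 < 0"
        using c01 pq by (metis mult.assoc mult_neg_pos not_square_less_zero less_le zero_le_square
            mult_eq_0_iff)
      ultimately show "0 < (-1) * ((U *\<^sub>v c) \<bullet> (A *\<^sub>v (U *\<^sub>v c)))"
        using eq unfolding x_def by linarith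
    qed
  qed
  hence ineg: "2 \<le> i_minus A" unfolding im by simp
  have "length (filter (\<lambda>e. e > 0) es) + length (filter (\<lambda>e. e < 0) es) \<le> n"
    using filter_disj_le[of "\<lambda>e. e > 0" "\<lambda>e. e < 0" es] lenes by auto
  hence "i_minus A \<le> n - 1" using ipos unfolding ip im by linarith
  with ipos ineg show ?thesis unfolding A_def by simp
qed

end
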